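(* There is a constant $c=c(d)>0$, depending only on $d$, with the following property. Let $C\subset\mathbb{R}^d$ be a convex body and let $\mathcal{H}_C$ denote the family of all homothets of $C$. Then: (i) for every finite set $S\subset\mathbb{R}^d$ and every $\epsilon>0$, there is a set $W\subset\mathbb{R}^d$ with $|W|\le c/\epsilon$ such that $W\cap C'\neq\emptyset$ for every $C'\in\mathcal{H}_C$ with $|C'\cap S|\ge \epsilon|S|$ (i.e. $(S,\mathcal{H}_C|_S)$ admits a weak $\epsilon$-net of size $O_d(1/\epsilon)$); (ii) for every $C$-nice measure $\mu$ and every $\epsilon>0$, there is a set $W\subset\mathbb{R}^d$ with $|W|\le c/\epsilon$ such that $W\cap C'\neq\emptyset$ for every $C'\in\mathcal{H}_C$ with $\mu(C')\ge\epsilon\,\mu(\mathbb{R}^d)$.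
   Context: A convex body is a convex compact set with nonempty interior. A homothet of $C$ is a set $\lambda C+x=\{\lambda c+x: c\in C\}$ with $x\in\mathbb{R}^d$ and $\lambda>0$. All measures are Borel measures on $\mathbb{R}^d$ that are finite on compact sets. A measure $\mu$ is non-$C$-degenerate if it vanishes on the boundary of every homothet of $C$, and $C$-nice if it is finite ($\mu(\mathbb{R}^d)<\infty$), non-$C$-degenerate, and there is a ball $K$ with $\mu(K)=\mu(\mathbb{R}^d)$. *)

theory Defs
  imports "HOL-Analysis.Analysis"
begin

definition convex_body :: "'a::euclidean_space set \<Rightarrow> bool" where
  "convex_body C \<longleftrightarrow> convex C \<and> compact C \<and> interior C \<noteq> {}"

definition homothets :: "'a::euclidean_space set \<Rightarrow> 'a set set" where
  "homothets C = {(\<lambda>c. lam *\<^sub>R c + x) ` C | lam x. lam > 0}"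

definition locally_finite_borel :: "'a::euclidean_space measure \<Rightarrow> bool" where
  "locally_finite_borel M \<longleftrightarrow> sets M = sets borel \<and>
     (\<forall>K. compact K \<longrightarrow> emeasure M K < \<infinity>)"

definition non_degenerate :: "'a::euclidean_space set \<Rightarrow> 'a measure \<Rightarrow> bool" where
  "non_degenerate C M \<longleftrightarrow> (\<forall>H \<in> homothets C. emeasure M (frontier H) = 0)"

definition nice_measure :: "'a::euclidean_space set \<Rightarrow> 'a measure \<Rightarrow> bool" where
  "nice_measure C M \<longleftrightarrow> locally_finite_borel M \<and> emeasure M (space M) < \<infinity> \<and>
     non_degenerate C M \<and> (\<exists>z r. emeasure M (cball z r) = emeasure M (space M))"

end

theory Submission
  imports Defs "Jordan_Normal_Form.Determinant"
begin


no_notation Finite_Cartesian_Product.vec_nth (infixl "$" 90)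

definition rv :: "nat \<Rightarrow> (nat \<Rightarrow> 'a::euclidean_space) \<Rightarrow> 'a \<Rightarrow> real Matrix.vec" where
  "rv d b p = Matrix.vec (Suc d) (\<lambda>j. if j = 0 then 1 else p \<bullet> b (j - 1))"

definition FF :: "nat \<Rightarrow> (nat \<Rightarrow> 'a::euclidean_space) \<Rightarrow> (nat \<Rightarrow> 'a) \<Rightarrow> real" where
  "FF d b u = Determinant.det (mat\<^sub>r (Suc d) (Suc d) (\<lambda>i. rv d b (u i)))"

lemma rv_carrier[simp]: "rv d b p \<in> carrier_vec (Suc d)"
  by (simp add: rv_def)

lemma FF_replace:
  fixes u :: "nat \<Rightarrow> 'a::euclidean_space"
  assumes i: "i \<le> d" and s: "(\<Sum>j\<le>d. \<beta> j) = 1" and p: "p = (\<Sum>j\<le>d. \<beta> j *\<^sub>R u j)"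
  shows "FF d b (u(i := p)) = \<beta> i * FF d b u"
proof -
  let ?n = "Suc d"
  have S: "{0..<?n} = {..d}" by auto
  have rvp: "rv d b p = finsum_vec TYPE(real) ?n (\<lambda>j. \<beta> j \<cdot>\<^sub>v rv d b (u j)) {0..<?n}"
  proof (rule eq_vecI)
    fix k assume k: "k < dim_vec (finsum_vec TYPE(real) ?n (\<lambda>j. \<beta> j \<cdot>\<^sub>v rv d b (u j)) {0..<?n})"
    have k': "k < ?n" using k finsum_vec_closed[of "(\<lambda>j. \<beta> j \<cdot>\<^sub>v rv d b (u j))" "{0..<?n}" ?n]
      by auto
    have "finsum_vec TYPE(real) ?n (\<lambda>j. \<beta> j \<cdot>\<^sub>v rv d b (u j)) {0..<?n} $ k
        = (\<Sum>j\<in>{0..<?n}. (\<beta> j \<cdot>\<^sub>v rv d b (u j)) $ k)"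
      by (rule index_finsum_vec) (use k' in auto)
    also have "\<dots> = (\<Sum>j\<le>d. \<beta> j * (if k = 0 then 1 else u j \<bullet> b (k - 1)))"
      unfolding S using k' by (intro sum.cong) (auto simp: rv_def)
    also have "\<dots> = rv d b p $ k"
    proof (cases "k = 0")
      case True then show ?thesis using k' s by (simp add: rv_def)
    next
      case False then show ?thesis using k' unfolding p
        by (simp add: rv_def inner_sum_left)
    qed
    finally show "rv d b p $ k = finsum_vec TYPE(real) ?n (\<lambda>j. \<beta> j \<cdot>\<^sub>v rv d b (u j)) {0..<?n} $ k" by simp
  next
    show "dim_vec (rv d b p) = dim_vec (finsum_vec TYPE(real) ?n (\<lambda>j. \<beta> j \<cdot>\<^sub>v rv d b (u j)) {0..<?n})"
      using finsum_vec_closed[of "(\<lambda>j. \<beta> j \<cdot>\<^sub>v rv d b (u j))" "{0..<?n}" ?n] by (simp add: rv_def)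
  qed
  have eq1: "mat\<^sub>r ?n ?n (\<lambda>r. rv d b ((u(i := p)) r)) =
     mat\<^sub>r ?n ?n (\<lambda>r. if r = i then finsum_vec TYPE(real) ?n (\<lambda>j. \<beta> j \<cdot>\<^sub>v rv d b (u j)) {0..<?n} else rv d b (u r))"
    using rvp by (intro arg_cong[where f="mat\<^sub>r ?n ?n"]) auto
  have "FF d b (u(i := p)) = (\<Sum>j\<in>{0..<?n}. Determinant.det (mat\<^sub>r ?n ?n (\<lambda>r. if r = i then \<beta> j \<cdot>\<^sub>v rv d b (u j) else rv d b (u r))))"
    unfolding FF_def eq1
    by (rule det_linear_row_finsum[where a="\<lambda>_ j. \<beta> j \<cdot>\<^sub>v rv d b (u j)"]) (use i in auto)
  also have "\<dots> = (\<Sum>j\<in>{0..<?n}. if j = i then \<beta> i * FF d b u else 0)"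
  proof (intro sum.cong refl)
    fix j assume j: "j \<in> {0..<?n}"
    have "mat\<^sub>r ?n ?n (\<lambda>r. if r = i then \<beta> j \<cdot>\<^sub>v rv d b (u j) else rv d b (u r))
        = multrow i (\<beta> j) (mat\<^sub>r ?n ?n (\<lambda>r. if r = i then rv d b (u j) else rv d b (u r)))"
      by (rule eq_matI) (auto simp: mat_multrow_def rv_def)
    then have "Determinant.det (mat\<^sub>r ?n ?n (\<lambda>r. if r = i then \<beta> j \<cdot>\<^sub>v rv d b (u j) else rv d b (u r)))
       = \<beta> j * Determinant.det (mat\<^sub>r ?n ?n (\<lambda>r. if r = i then rv d b (u j) else rv d b (u r)))"
      using i by (simp add: det_multrow[of i "Suc d"])
    also have "\<dots> = (if j = i then \<beta> i * FF d b u else 0)"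
    proof (cases "j = i")
      case True
      have "(\<lambda>r. if r = i then rv d b (u j) else rv d b (u r)) = (\<lambda>r. rv d b (u r))"
        using True by auto
      then show ?thesis using True unfolding FF_def by simp
    next
      case False
      have "Determinant.det (mat\<^sub>r ?n ?n (\<lambda>r. if r = i then rv d b (u j) else rv d b (u r))) = 0"
        by (rule det_identical_rows[OF _ False[symmetric], of _ ?n]) (use i j False in auto)
      then show ?thesis using False by simp
    qed
    finally show "Determinant.det (mat\<^sub>r ?n ?n (\<lambda>r. if r = i then \<beta> j \<cdot>\<^sub>v rv d b (u j) else rv d b (u r))) = (if j = i then \<beta> i * FF d b u else 0)" .
  qed
  also have "\<dots> = \<beta> i * FF d b u" using i by simp
  finally show ?thesis .
qed


lemma bary_exists:
  fixes u :: "nat \<Rightarrow> 'a::euclidean_space"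
  assumes b: "bij_betw b {0..<DIM('a)} Basis" and d: "d = DIM('a)"
    and nz: "FF d b u \<noteq> 0"
  shows "\<exists>\<beta>. (\<Sum>j\<le>d. \<beta> j) = 1 \<and> p = (\<Sum>j\<le>d. \<beta> j *\<^sub>R u j)"
proof -
  let ?n = "Suc d"
  define M where "M = mat\<^sub>r ?n ?n (\<lambda>i. rv d b (u i))"
  have Mc: "M \<in> carrier_mat ?n ?n" unfolding M_def by simp
  have MT: "transpose_mat M \<in> carrier_mat ?n ?n" using Mc by simp
  have "Determinant.det (transpose_mat M) \<noteq> 0"
    using nz det_transpose[OF Mc] unfolding FF_def M_def by simp
  from det_non_zero_imp_unit[OF MT this, of undefined]
  obtain B where B: "B \<in> carrier_mat ?n ?n" and MB: "transpose_mat M * B = 1\<^sub>m ?n"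
    unfolding Units_def ring_mat_def by auto
  define t where "t = rv d b p"
  define \<beta>v where "\<beta>v = B *\<^sub>v t"
  have t: "t \<in> carrier_vec ?n" unfolding t_def by simp
  have bc: "\<beta>v \<in> carrier_vec ?n" unfolding \<beta>v_def using B t by simp
  have "transpose_mat M *\<^sub>v \<beta>v = t"
    unfolding \<beta>v_def using assoc_mult_mat_vec[OF MT B t, symmetric] MB t by simp
  then have eqk: "(\<Sum>i\<le>d. \<beta>v $ i * (rv d b (u i) $ k)) = t $ k" if k: "k < ?n" for k
  proof -
    have "(transpose_mat M *\<^sub>v \<beta>v) $ k = t $ k" using \<open>transpose_mat M *\<^sub>v \<beta>v = t\<close> by simp
    moreover have "(transpose_mat M *\<^sub>v \<beta>v) $ k = (\<Sum>i\<in>{0..<?n}. \<beta>v $ i * (rv d b (u i) $ k))"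
      using k Mc bc unfolding M_def
      by (simp add: scalar_prod_def mult.commute)
    moreover have "{0..<?n} = {..d}" by auto
    ultimately show ?thesis by simp
  qed
  define \<beta> where "\<beta> j = \<beta>v $ j" for j
  have s1: "(\<Sum>j\<le>d. \<beta> j) = 1"
    using eqk[of 0] unfolding \<beta>_def t_def by (simp add: rv_def)
  have "p = (\<Sum>j\<le>d. \<beta> j *\<^sub>R u j)"
  proof (rule euclidean_eqI)
    fix e :: 'a assume e: "e \<in> Basis"
    then obtain k where k: "k < d" "e = b k" using b d e unfolding bij_betw_def by (metis atLeastLessThan_iff imageE)
    have "(\<Sum>i\<le>d. \<beta>v $ i * (rv d b (u i) $ Suc k)) = t $ Suc k" using eqk[of "Suc k"] k by simp
    then have "(\<Sum>i\<le>d. \<beta> i * (u i \<bullet> e)) = p \<bullet> e"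
      unfolding \<beta>_def t_def using k by (simp add: rv_def)
    then show "p \<bullet> e = (\<Sum>j\<le>d. \<beta> j *\<^sub>R u j) \<bullet> e"
      by (simp add: inner_sum_left)
  qed
  with s1 show ?thesis by blast
qed


lemma FF_bound:
  fixes u :: "nat \<Rightarrow> 'a::euclidean_space"
  assumes u: "\<forall>i\<le>d. norm (u i) \<le> R" and R: "R \<ge> 1" and b: "\<forall>j<d. b j \<in> Basis"
  shows "\<bar>FF d b u\<bar> \<le> fact (Suc d) * R ^ Suc d"
proof -
  let ?n = "Suc d"
  let ?M = "mat\<^sub>r ?n ?n (\<lambda>i. rv d b (u i))"
  have ent: "\<bar>?M $$ (i, j)\<bar> \<le> R" if "i < ?n" "j < ?n" for i j
  proof (cases "j = 0")
    case True then show ?thesis using that R by (simp add: rv_def)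
  next
    case False
    then have "\<bar>u i \<bullet> b (j - 1)\<bar> \<le> norm (u i)" using b that by (intro Basis_le_norm) auto
    also have "\<dots> \<le> R" using u that by auto
    finally show ?thesis using that False by (simp add: rv_def)
  qed
  have "\<bar>FF d b u\<bar> = \<bar>\<Sum>p\<in>{p. p permutes {0..<?n}}. signof p * (\<Prod>i = 0..<?n. ?M $$ (i, p i))\<bar>"
    unfolding FF_def by (subst det_def'[of _ ?n]) auto
  also have "\<dots> \<le> (\<Sum>p\<in>{p. p permutes {0..<?n}}. \<bar>signof p * (\<Prod>i = 0..<?n. ?M $$ (i, p i))\<bar>)"
    by (rule sum_abs)
  also have "\<dots> \<le> (\<Sum>p\<in>{p. p permutes {0..<?n}}. R ^ ?n)"
  proof (rule sum_mono)
    fix p assume p: "p \<in> {p. p permutes {0..<?n}}"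
    have sg: "\<bar>signof p :: real\<bar> = 1" by (simp add: sign_def)
    have "\<bar>(\<Prod>i = 0..<?n. ?M $$ (i, p i))\<bar> = (\<Prod>i = 0..<?n. \<bar>?M $$ (i, p i)\<bar>)"
      by (rule abs_prod)
    also have "\<dots> \<le> (\<Prod>i = 0..<?n. R)"
    proof (rule prod_mono)
      fix i assume i: "i \<in> {0..<?n}"
      have "p i < ?n" using p i permutes_in_image[of p "{0..<?n}" i] by auto
      then show "0 \<le> \<bar>?M $$ (i, p i)\<bar> \<and> \<bar>?M $$ (i, p i)\<bar> \<le> R" using ent i by auto
    qed
    finally show "\<bar>signof p * (\<Prod>i = 0..<?n. ?M $$ (i, p i))\<bar> \<le> R ^ ?n"
      by (simp add: abs_mult sg)
  qed
  also have "\<dots> = fact ?n * R ^ ?n"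
    using card_permutations[of "{0..<?n}" ?n] by (simp add: algebra_simps)
  finally show ?thesis .
qed

lemma nondeg_exists:
  fixes C :: "'a::euclidean_space set"
  assumes b: "bij_betw b {0..<DIM('a)} Basis" and d: "d = DIM('a)"
    and r: "r > 0" and ball: "ball z r \<subseteq> C"
  shows "\<exists>u. (\<forall>i\<le>d. u i \<in> C) \<and> FF d b u \<noteq> 0"
proof -
  let ?n = "Suc d"
  define s where "s = r / 2"
  have s: "s > 0" "s < r" using r by (auto simp: s_def)
  define u where "u i = (if i = 0 then z else z + s *\<^sub>R b (i - 1))" for i
  have bB: "b j \<in> Basis" if "j < d" for j using b d that unfolding bij_betw_def by auto
  have binj: "b j \<bullet> b m = (if j = m then 1 else 0)" if "j < d" "m < d" for j m
  proof -
    have "b j = b m \<longleftrightarrow> j = m" using b d that unfolding bij_betw_def inj_on_def by auto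
    then show ?thesis using bB[OF that(1)] bB[OF that(2)] by (simp add: inner_Basis)
  qed
  have uC: "\<forall>i\<le>d. u i \<in> C"
  proof (intro allI impI)
    fix i assume i: "i \<le> d"
    show "u i \<in> C"
    proof (cases "i = 0")
      case True then show ?thesis using ball r by (auto simp: u_def)
    next
      case False
      then have "norm (b (i - 1)) = 1" using bB[of "i - 1"] i by auto
      then have "dist z (u i) = s" using False s by (simp add: u_def dist_norm)
      then show ?thesis using ball s by auto
    qed
  qed
  define M where "M = mat\<^sub>r ?n ?n (\<lambda>i. rv d b (u i))"
  have Mc: "M \<in> carrier_mat ?n ?n" unfolding M_def by simp
  have "Determinant.det M \<noteq> 0"
  proof
    assume "Determinant.det M = 0"
    then obtain v where v: "v \<in> carrier_vec ?n" "v \<noteq> 0\<^sub>v ?n" "M *\<^sub>v v = 0\<^sub>v ?n"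
      using det_0_iff_vec_prod_zero_field[OF Mc] by auto
    define L where "L i = (\<Sum>k<?n. rv d b (u i) $ k * v $ k)" for i
    have L0: "L i = 0" if "i < ?n" for i
    proof -
      have "(M *\<^sub>v v) $ i = 0" using v that by simp
      moreover have "(M *\<^sub>v v) $ i = L i" using that v(1) unfolding M_def L_def
        by (simp add: scalar_prod_def atLeast0LessThan del: sum.lessThan_Suc)
      ultimately show ?thesis by simp
    qed
    have Lsplit: "L i = v $ 0 + (\<Sum>m<d. (u i \<bullet> b m) * v $ Suc m)" for i
      unfolding L_def by (subst sum.lessThan_Suc_shift) (simp add: rv_def)
    have vj: "v $ Suc j = 0" if j: "j < d" for j
    proof -
      have "(\<Sum>m<d. (u (Suc j) \<bullet> b m) * v $ Suc m) = (\<Sum>m<d. (z \<bullet> b m) * v $ Suc m) + (\<Sum>m<d. (if j = m then s * v $ Suc m else 0))"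
        unfolding sum.distrib[symmetric]
        by (intro sum.cong refl) (auto simp: u_def inner_add_left binj j algebra_simps)
      also have "(\<Sum>m<d. (if j = m then s * v $ Suc m else 0)) = s * v $ Suc j"
        using j by (simp add: sum.delta)
      finally have "L (Suc j) = L 0 + s * v $ Suc j"
        unfolding Lsplit by (simp add: u_def)
      then show ?thesis using L0[of 0] L0[of "Suc j"] j s by simp
    qed
    have "L 0 = v $ 0" unfolding Lsplit using vj by simp
    then have v0: "v $ 0 = 0" using L0[of 0] by simp
    have "v = 0\<^sub>v ?n"
    proof (rule eq_vecI)
      fix k assume "k < dim_vec (0\<^sub>v ?n :: real Matrix.vec)"
      then have k: "k < ?n" by simp
      show "v $ k = 0\<^sub>v ?n $ k"
        using k v0 vj[of "k - 1"] by (cases k) auto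
    qed (use v in simp)
    with v show False by simp
  qed
  then show ?thesis using uC unfolding FF_def M_def by blast
qed


lemma normalize_body:
  fixes C :: "'a::euclidean_space set"
  assumes C: "convex_body C"
  shows "\<exists>u. (\<forall>i\<le>DIM('a). u i \<in> C) \<and>
    (\<forall>p\<in>C. \<exists>\<beta>. (\<Sum>j\<le>DIM('a). \<beta> j) = 1 \<and> p = (\<Sum>j\<le>DIM('a). \<beta> j *\<^sub>R u j) \<and> (\<forall>j\<le>DIM('a). \<bar>\<beta> j\<bar> \<le> 2))"
proof -
  define d where "d = DIM('a)"
  obtain b where b: "bij_betw b {0..<DIM('a)} (Basis :: 'a set)"
    using ex_bij_betw_nat_finite[OF finite_Basis] by blast
  have bB: "\<forall>j<d. b j \<in> Basis" using b unfolding bij_betw_def d_def by auto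
  from C obtain z where "z \<in> interior C" unfolding convex_body_def by auto
  then obtain r where r: "r > 0" "ball z r \<subseteq> C" using mem_interior by blast
  have "bounded C" using C unfolding convex_body_def by (simp add: compact_imp_bounded)
  then obtain R0 where R0: "\<forall>x\<in>C. norm x \<le> R0" unfolding bounded_iff by blast
  define R where "R = max R0 1"
  have R: "R \<ge> 1" "\<forall>x\<in>C. norm x \<le> R" using R0 unfolding R_def by auto
  define U where "U = {u. \<forall>i\<le>d. u i \<in> C}"
  define V where "V = (\<lambda>u. \<bar>FF d b u\<bar>) ` U"
  have bdd: "bdd_above V" unfolding V_def U_def
  proof (rule bdd_aboveI[where M="fact (Suc d) * R ^ Suc d"])
    fix x assume "x \<in> (\<lambda>u. \<bar>FF d b u\<bar>) ` {u. \<forall>i\<le>d. u i \<in> C}"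
    then obtain u where "\<forall>i\<le>d. u i \<in> C" "x = \<bar>FF d b u\<bar>" by auto
    then show "x \<le> fact (Suc d) * R ^ Suc d" using FF_bound[OF _ R(1) bB, of u] R(2) by auto
  qed
  obtain u0 where u0: "\<forall>i\<le>d. u0 i \<in> C" "FF d b u0 \<noteq> 0"
    using nondeg_exists[OF b d_def r] by blast
  have u0V: "\<bar>FF d b u0\<bar> \<in> V" using u0 unfolding V_def U_def by auto
  define S where "S = Sup V"
  have Sge: "\<bar>FF d b u0\<bar> \<le> S" unfolding S_def by (rule cSup_upper[OF u0V bdd])
  have "S / 2 < S" using Sge u0 by auto
  then obtain v where "v \<in> V" "S / 2 < v"
    using less_cSup_iff[of V "S/2"] bdd u0V unfolding S_def by auto
  then obtain u where uU: "u \<in> U" and uS: "S / 2 < \<bar>FF d b u\<bar>" unfolding V_def by auto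
  have nz: "FF d b u \<noteq> 0" using uS Sge by auto
  have "\<forall>p\<in>C. \<exists>\<beta>. (\<Sum>j\<le>d. \<beta> j) = 1 \<and> p = (\<Sum>j\<le>d. \<beta> j *\<^sub>R u j) \<and> (\<forall>j\<le>d. \<bar>\<beta> j\<bar> \<le> 2)"
  proof
    fix p assume p: "p \<in> C"
    obtain \<beta> where \<beta>: "(\<Sum>j\<le>d. \<beta> j) = 1" "p = (\<Sum>j\<le>d. \<beta> j *\<^sub>R u j)"
      using bary_exists[OF b d_def nz] by blast
    have "\<bar>\<beta> i\<bar> \<le> 2" if i: "i \<le> d" for i
    proof -
      have "u(i := p) \<in> U" using uU p unfolding U_def by auto
      then have "\<bar>FF d b (u(i := p))\<bar> \<le> S" unfolding S_def V_def
        by (intro cSup_upper bdd[unfolded V_def]) auto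
      then have "\<bar>\<beta> i\<bar> * \<bar>FF d b u\<bar> \<le> S" using FF_replace[OF i \<beta>] by (simp add: abs_mult)
      then have "\<bar>\<beta> i\<bar> * \<bar>FF d b u\<bar> \<le> 2 * \<bar>FF d b u\<bar>" using uS by linarith
      then show ?thesis using nz by simp
    qed
    then show "\<exists>\<beta>. (\<Sum>j\<le>d. \<beta> j) = 1 \<and> p = (\<Sum>j\<le>d. \<beta> j *\<^sub>R u j) \<and> (\<forall>j\<le>d. \<bar>\<beta> j\<bar> \<le> 2)"
      using \<beta> by blast
  qed
  then show ?thesis using uU unfolding U_def d_def by blast
qed



definition Bd :: "nat \<Rightarrow> int" where
  "Bd d = int (2*(d+1) + (d+1)*(6*(d+1)+1))"

definition grid :: "(nat \<Rightarrow> 'a::euclidean_space) \<Rightarrow> nat \<Rightarrow> 'a \<Rightarrow> real \<Rightarrow> 'a set" where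
  "grid u d x lam = (\<lambda>k. x + lam *\<^sub>R (\<Sum>i\<le>d. (of_int (k i) / real (2*(d+1))) *\<^sub>R u i))
      ` (PiE {..d} (\<lambda>_. {-Bd d..Bd d}))"

lemma grid_card: "finite (grid u d x lam) \<and> card (grid u d x lam) \<le> nat (2 * Bd d + 1) ^ Suc d"
proof -
  have fin: "finite (PiE {..d} (\<lambda>_. {-Bd d..Bd d}))" by (intro finite_PiE) auto
  have "card (PiE {..d} (\<lambda>_. {-Bd d..Bd d})) = nat (2 * Bd d + 1) ^ Suc d"
  proof -
    have "card (PiE {..d} (\<lambda>_. {-Bd d..Bd d})) = (\<Prod>i\<le>d. card {-Bd d..Bd d})"
      by (rule card_PiE) auto
    also have "\<dots> = card {-Bd d..Bd d} ^ Suc d" by simp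
    also have "card {-Bd d..Bd d} = nat (2 * Bd d + 1)" by simp
    finally show ?thesis .
  qed
  then show ?thesis unfolding grid_def using fin card_image_le[OF fin] finite_imageI[OF fin] by auto
qed

lemma key_alg:
  fixes u :: "nat \<Rightarrow> 'a::real_vector"
  shows "(\<Sum>i\<le>d. (\<beta>2 i + \<alpha> i / 2 - \<beta>1 i / 2) *\<^sub>R u i) =
    (\<Sum>j\<le>d. \<beta>2 j *\<^sub>R u j) + (1/2) *\<^sub>R (\<Sum>i\<le>d. \<alpha> i *\<^sub>R u i) - (1/2) *\<^sub>R (\<Sum>j\<le>d. \<beta>1 j *\<^sub>R u j)"
proof -
  have "(\<Sum>i\<le>d. (\<beta>2 i + \<alpha> i / 2 - \<beta>1 i / 2) *\<^sub>R u i) =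
     (\<Sum>i\<le>d. \<beta>2 i *\<^sub>R u i + (1/2) *\<^sub>R (\<alpha> i *\<^sub>R u i) - (1/2) *\<^sub>R (\<beta>1 i *\<^sub>R u i))"
    by (intro sum.cong refl) (simp add: scaleR_add_left scaleR_diff_left)
  also have "\<dots> = (\<Sum>i\<le>d. \<beta>2 i *\<^sub>R u i) + (\<Sum>i\<le>d. (1/2) *\<^sub>R (\<alpha> i *\<^sub>R u i)) - (\<Sum>i\<le>d. (1/2) *\<^sub>R (\<beta>1 i *\<^sub>R u i))"
    by (simp only: sum.distrib sum_subtractf)
  also have "\<dots> = (\<Sum>j\<le>d. \<beta>2 j *\<^sub>R u j) + (1/2) *\<^sub>R (\<Sum>i\<le>d. \<alpha> i *\<^sub>R u i) - (1/2) *\<^sub>R (\<Sum>j\<le>d. \<beta>1 j *\<^sub>R u j)"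
    by (simp only: scaleR_sum_right)
  finally show ?thesis .
qed

lemma P_alg:
  fixes c c1 c2 x y :: "'a::real_vector"
  assumes q: "mu *\<^sub>R c1 + y = lam *\<^sub>R c2 + x" and mt: "mu * t = lam / 2"
  shows "mu *\<^sub>R ((1 - t) *\<^sub>R c1 + t *\<^sub>R c) + y = x + lam *\<^sub>R (c2 + (1/2) *\<^sub>R c - (1/2) *\<^sub>R c1)"
proof -
  have "mu *\<^sub>R ((1 - t) *\<^sub>R c1 + t *\<^sub>R c) + y = (mu *\<^sub>R c1 + y) + (mu * t) *\<^sub>R c - (mu * t) *\<^sub>R c1"
    by (simp add: algebra_simps)
  also have "\<dots> = x + lam *\<^sub>R (c2 + (1/2) *\<^sub>R c - (1/2) *\<^sub>R c1)"
    unfolding q mt by (simp add: algebra_simps)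
  finally show ?thesis .
qed

lemma grid_hit:
  fixes C :: "'a::euclidean_space set" and u :: "nat \<Rightarrow> 'a"
  assumes cvx: "convex C"
    and uC: "\<forall>i\<le>d. u i \<in> C"
    and bary: "\<forall>p\<in>C. \<exists>\<beta>. (\<Sum>j\<le>d. \<beta> j) = 1 \<and> p = (\<Sum>j\<le>d. \<beta> j *\<^sub>R u j) \<and> (\<forall>j\<le>d. \<bar>\<beta> j\<bar> \<le> 2)"
    and lam: "lam > 0" and mu: "mu \<ge> lam / 2"
    and meet: "(\<lambda>c. mu *\<^sub>R c + y) ` C \<inter> (\<lambda>c. lam *\<^sub>R c + x) ` C \<noteq> {}"
  shows "grid u d x lam \<inter> (\<lambda>c. mu *\<^sub>R c + y) ` C \<noteq> {}"
proof -
  define n where "n = 2 * (d + 1)"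
  have n: "n > 0" "real n / 2 = real d + 1" unfolding n_def by auto
  from meet obtain c1 c2 where c1: "c1 \<in> C" and c2: "c2 \<in> C" and q: "mu *\<^sub>R c1 + y = lam *\<^sub>R c2 + x"
    by auto
  obtain \<beta>1 where b1: "(\<Sum>j\<le>d. \<beta>1 j) = 1" "c1 = (\<Sum>j\<le>d. \<beta>1 j *\<^sub>R u j)" "\<forall>j\<le>d. \<bar>\<beta>1 j\<bar> \<le> 2"
    using bary c1 by blast
  obtain \<beta>2 where b2: "(\<Sum>j\<le>d. \<beta>2 j) = 1" "c2 = (\<Sum>j\<le>d. \<beta>2 j *\<^sub>R u j)" "\<forall>j\<le>d. \<bar>\<beta>2 j\<bar> \<le> 2"
    using bary c2 by blast
  define \<gamma> where "\<gamma> j = \<beta>2 j - \<beta>1 j / 2" for j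
  have g_sum: "(\<Sum>j\<le>d. \<gamma> j) = 1 / 2"
    unfolding \<gamma>_def sum_subtractf sum_divide_distrib[symmetric] b1 b2 by simp
  have g_bd: "\<bar>\<gamma> j\<bar> \<le> 3" if "j \<le> d" for j
    using b1(3) b2(3) that unfolding \<gamma>_def by fastforce
  define k where "k i = (if i = 0 then int n - (\<Sum>j\<in>{1..d}. \<lceil>real n * \<gamma> j\<rceil>)
                         else if i \<le> d then \<lceil>real n * \<gamma> i\<rceil> else undefined)" for i
  have split: "{..d} = insert 0 {1..d}" by auto
  have k_sum: "(\<Sum>i\<le>d. k i) = int n"
    unfolding split by (subst sum.insert) (auto simp: k_def)
  have g_split: "\<gamma> 0 + (\<Sum>j\<in>{1..d}. \<gamma> j) = 1/2"
    using g_sum unfolding split by (subst (asm) sum.insert) auto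
  have k_ge: "real_of_int (k i) \<ge> real n * \<gamma> i" if i: "i \<le> d" for i
  proof (cases "i = 0")
    case True
    have "(\<Sum>j\<in>{1..d}. real_of_int \<lceil>real n * \<gamma> j\<rceil>) \<le> (\<Sum>j\<in>{1..d}. real n * \<gamma> j + 1)"
      by (intro sum_mono) linarith
    also have "\<dots> = real n * (\<Sum>j\<in>{1..d}. \<gamma> j) + real d"
      by (simp add: sum.distrib sum_distrib_left)
    also have "(\<Sum>j\<in>{1..d}. \<gamma> j) = 1/2 - \<gamma> 0" using g_split by linarith
    finally have "(\<Sum>j\<in>{1..d}. real_of_int \<lceil>real n * \<gamma> j\<rceil>) \<le> real n * (1/2 - \<gamma> 0) + real d" .
    then show ?thesis using True n by (simp add: k_def algebra_simps)
  next
    case False then show ?thesis using i by (simp add: k_def)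
  qed
  have k_bd: "\<bar>k i\<bar> \<le> Bd d" if i: "i \<le> d" for i
  proof -
    have ce: "\<bar>\<lceil>real n * \<gamma> j\<rceil>\<bar> \<le> int (3 * n + 1)" if "j \<le> d" for j
    proof -
      have "\<bar>real n * \<gamma> j\<bar> \<le> real n * 3" using g_bd[OF that] by (simp add: abs_mult mult_left_mono)
      then show ?thesis by linarith
    qed
    have "\<bar>\<Sum>j\<in>{1..d}. \<lceil>real n * \<gamma> j\<rceil>\<bar> \<le> (\<Sum>j\<in>{1..d}. \<bar>\<lceil>real n * \<gamma> j\<rceil>\<bar>)" by (rule sum_abs)
    also have "\<dots> \<le> (\<Sum>j\<in>{1..d}. int (3 * n + 1))" by (intro sum_mono ce) auto
    also have "\<dots> = int d * int (3 * n + 1)" by simp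
    finally have s: "\<bar>\<Sum>j\<in>{1..d}. \<lceil>real n * \<gamma> j\<rceil>\<bar> \<le> int d * int (3 * n + 1)" .
    show ?thesis
    proof (cases "i = 0")
      case True
      then have "\<bar>k i\<bar> \<le> int n + int d * int (3 * n + 1)" using s by (simp add: k_def)
      also have "\<dots> \<le> Bd d" unfolding Bd_def n_def by simp
      finally show ?thesis .
    next
      case False
      then have "\<bar>k i\<bar> \<le> int (3 * n + 1)" using ce[OF i] i by (simp add: k_def)
      also have "\<dots> \<le> Bd d" unfolding Bd_def n_def by simp
      finally show ?thesis .
    qed
  qed
  have kK: "k \<in> PiE {..d} (\<lambda>_. {-Bd d..Bd d})"
  proof -
    have "k i = undefined" if "i \<notin> {..d}" for i using that by (simp add: k_def)
    then show ?thesis using k_bd by (force simp: PiE_def extensional_def abs_le_iff)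
  qed
  define \<delta> where "\<delta> i = real_of_int (k i) / real n" for i
  define \<alpha> where "\<alpha> i = 2 * (\<delta> i - \<gamma> i)" for i
  have a_nn: "\<alpha> i \<ge> 0" if "i \<le> d" for i
    using k_ge[OF that] n unfolding \<alpha>_def \<delta>_def by (simp add: field_simps)
  have d_sum: "(\<Sum>i\<le>d. \<delta> i) = 1"
  proof -
    have "real_of_int (\<Sum>i\<le>d. k i) = real_of_int (int n)" using k_sum by simp
    then have ks: "(\<Sum>i\<le>d. real_of_int (k i)) = real n" by simp
    show ?thesis unfolding \<delta>_def sum_divide_distrib[symmetric] ks using n by simp
  qed
  have a_sum: "(\<Sum>i\<le>d. \<alpha> i) = 1"
    unfolding \<alpha>_def sum_distrib_left[symmetric] sum_subtractf d_sum g_sum by simp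
  define c where "c = (\<Sum>i\<le>d. \<alpha> i *\<^sub>R u i)"
  have cC: "c \<in> C" unfolding c_def
    by (rule convex_sum[OF finite_atMost cvx a_sum]) (use a_nn uC in auto)
  define t where "t = lam / (2 * mu)"
  have mu0: "mu > 0" using lam mu by auto
  have t: "0 < t" "t \<le> 1" using lam mu mu0 unfolding t_def by (auto simp: field_simps)
  have c'C: "(1 - t) *\<^sub>R c1 + t *\<^sub>R c \<in> C"
  proof -
    have "\<forall>x\<in>C. \<forall>y\<in>C. \<forall>u. 0 \<le> u \<and> u \<le> 1 \<longrightarrow> (1 - u) *\<^sub>R x + u *\<^sub>R y \<in> C"
      using cvx unfolding convex_alt by blast
    from this[rule_format, OF c1 cC, of t] t show ?thesis by simp
  qed
  have "(\<Sum>i\<le>d. \<delta> i *\<^sub>R u i) = (\<Sum>i\<le>d. (\<beta>2 i + \<alpha> i / 2 - \<beta>1 i / 2) *\<^sub>R u i)"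
    by (intro sum.cong refl) (simp add: \<alpha>_def \<gamma>_def field_simps)
  also have "\<dots> = c2 + (1/2) *\<^sub>R c - (1/2) *\<^sub>R c1"
    unfolding b1(2) b2(2) c_def by (rule key_alg)
  finally have key: "(\<Sum>i\<le>d. \<delta> i *\<^sub>R u i) = c2 + (1/2) *\<^sub>R c - (1/2) *\<^sub>R c1" .
  have mt: "mu * t = lam / 2" using mu0 unfolding t_def by simp
  have "mu *\<^sub>R ((1 - t) *\<^sub>R c1 + t *\<^sub>R c) + y = x + lam *\<^sub>R (c2 + (1/2) *\<^sub>R c - (1/2) *\<^sub>R c1)"
    by (rule P_alg[OF q mt])
  also have "\<dots> = x + lam *\<^sub>R (\<Sum>i\<le>d. (of_int (k i) / real (2*(d+1))) *\<^sub>R u i)"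
    unfolding key[symmetric] \<delta>_def n_def by simp
  finally have P: "mu *\<^sub>R ((1 - t) *\<^sub>R c1 + t *\<^sub>R c) + y = x + lam *\<^sub>R (\<Sum>i\<le>d. (of_int (k i) / real (2*(d+1))) *\<^sub>R u i)" .
  have "x + lam *\<^sub>R (\<Sum>i\<le>d. (of_int (k i) / real (2*(d+1))) *\<^sub>R u i) \<in> grid u d x lam"
    unfolding grid_def using kK by blast
  moreover have "x + lam *\<^sub>R (\<Sum>i\<le>d. (of_int (k i) / real (2*(d+1))) *\<^sub>R u i) \<in> (\<lambda>c. mu *\<^sub>R c + y) ` C"
    using P[symmetric] c'C by blast
  ultimately show ?thesis by blast
qed



definition hmt :: "'a::euclidean_space set \<Rightarrow> 'a \<Rightarrow> real \<Rightarrow> 'a set" where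
  "hmt C y mu = (\<lambda>c. mu *\<^sub>R c + y) ` C"

lemma iterate:
  fixes C :: "'a::euclidean_space set" and m :: "'a set \<Rightarrow> 'a set \<Rightarrow> real"
    and T :: "'a set \<Rightarrow> real" and adm :: "'a set \<Rightarrow> bool" and G :: "'a \<Rightarrow> real \<Rightarrow> 'a set"
  assumes t: "t > 0" and N: "N \<ge> 1"
    and G: "\<And>x lam. lam > 0 \<Longrightarrow> finite (G x lam) \<and> card (G x lam) \<le> N"
    and Ghit: "\<And>x lam y mu. lam > 0 \<Longrightarrow> mu \<ge> lam / 2 \<Longrightarrow> hmt C y mu \<inter> hmt C x lam \<noteq> {}
                 \<Longrightarrow> G x lam \<inter> hmt C y mu \<noteq> {}"
    and mloc: "\<And>A B D. D \<inter> A = D \<inter> B \<Longrightarrow> m A D = m B D"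
    and Tpos: "\<And>A. adm A \<Longrightarrow> T A \<ge> 0"
    and Tadd: "\<And>A x lam. adm A \<Longrightarrow> lam > 0 \<Longrightarrow> adm (A \<union> hmt C x lam) \<and> T (A \<union> hmt C x lam) = T A - m A (hmt C x lam)"
    and Tadd1: "\<And>A p. adm A \<Longrightarrow> adm (A \<union> {p}) \<and> T (A \<union> {p}) = T A - m A {p}"
    and atom: "\<And>A. adm A \<Longrightarrow> (\<forall>\<eta>>0. \<exists>y mu. 0 < mu \<and> mu < \<eta> \<and> m A (hmt C y mu) \<ge> t) \<Longrightarrow> \<exists>p. m A {p} \<ge> t"
  shows "adm A \<Longrightarrow> T A < (real k + 1) * t \<Longrightarrow>
    \<exists>W. finite W \<and> card W \<le> N * k \<and>
       (\<forall>y mu. mu > 0 \<longrightarrow> hmt C y mu \<inter> A = {} \<longrightarrow> m A (hmt C y mu) \<ge> t \<longrightarrow> W \<inter> hmt C y mu \<noteq> {})"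
proof (induction k arbitrary: A)
  case 0
  have "\<not> (mu > 0 \<and> m A (hmt C y mu) \<ge> t)" for y mu
  proof
    assume a: "mu > 0 \<and> m A (hmt C y mu) \<ge> t"
    have "T (A \<union> hmt C y mu) = T A - m A (hmt C y mu)" using Tadd[OF 0(1)] a by blast
    moreover have "T (A \<union> hmt C y mu) \<ge> 0" using Tadd[OF 0(1)] Tpos a by blast
    ultimately show False using 0(2) a by simp
  qed
  then show ?case by (intro exI[of _ "{}"]) auto
next
  case (Suc k)
  define \<Lambda> where "\<Lambda> = {mu. mu > 0 \<and> (\<exists>y. m A (hmt C y mu) \<ge> t)}"
  show ?case
  proof (cases "\<Lambda> = {}")
    case True
    then show ?thesis unfolding \<Lambda>_def by (intro exI[of _ "{}"]) auto
  next
    case False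
    have bdd: "bdd_below \<Lambda>" unfolding \<Lambda>_def by (rule bdd_belowI[of _ 0]) auto
    define L where "L = Inf \<Lambda>"
    have L0: "L \<ge> 0" unfolding L_def using False by (intro cInf_greatest) (auto simp: \<Lambda>_def)
    have Lle: "L \<le> mu" if "mu \<in> \<Lambda>" for mu unfolding L_def using that bdd by (rule cInf_lower)
    have hitcase: "\<exists>W. finite W \<and> card W \<le> N * Suc k \<and>
       (\<forall>y mu. mu > 0 \<longrightarrow> hmt C y mu \<inter> A = {} \<longrightarrow> m A (hmt C y mu) \<ge> t \<longrightarrow> W \<inter> hmt C y mu \<noteq> {})"
      if H: "adm (A \<union> H)" "T (A \<union> H) = T A - m A H" "m A H \<ge> t"
        and X: "finite X" "card X \<le> N"
        and hitX: "\<And>y mu. mu > 0 \<Longrightarrow> m A (hmt C y mu) \<ge> t \<Longrightarrow> hmt C y mu \<inter> H \<noteq> {} \<Longrightarrow> X \<inter> hmt C y mu \<noteq> {}"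
      for H X
    proof -
      have "T (A \<union> H) < (real k + 1) * t" using H Suc.prems(2) by (simp add: algebra_simps)
      from Suc.IH[OF H(1) this] obtain W where W: "finite W" "card W \<le> N * k"
        "\<forall>y mu. mu > 0 \<longrightarrow> hmt C y mu \<inter> (A \<union> H) = {} \<longrightarrow> m (A \<union> H) (hmt C y mu) \<ge> t \<longrightarrow> W \<inter> hmt C y mu \<noteq> {}"
        by blast
      have "card (W \<union> X) \<le> N * Suc k"
        using card_Un_le[of W X] W X by simp
      moreover have "(W \<union> X) \<inter> hmt C y mu \<noteq> {}"
        if "mu > 0" "hmt C y mu \<inter> A = {}" "m A (hmt C y mu) \<ge> t" for y mu
      proof (cases "hmt C y mu \<inter> H = {}")
        case True
        have e: "hmt C y mu \<inter> (A \<union> H) = {}" using True that(2) by blast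
        have "m (A \<union> H) (hmt C y mu) = m A (hmt C y mu)" by (rule mloc) (use e that(2) in blast)
        then have "W \<inter> hmt C y mu \<noteq> {}" using W(3) that e by auto
        then show ?thesis by blast
      next
        case False
        then show ?thesis using hitX[OF that(1) that(3)] by blast
      qed
      ultimately show ?thesis using W X by (intro exI[of _ "W \<union> X"]) auto
    qed
    show ?thesis
    proof (cases "L > 0")
      case True
      have "L < 2 * L" using True by simp
      then obtain lam where lam: "lam \<in> \<Lambda>" "lam < 2 * L"
        using cInf_lessD[OF False] unfolding L_def by blast
      then obtain x where x: "m A (hmt C x lam) \<ge> t" and lam0: "lam > 0" unfolding \<Lambda>_def by blast
      show ?thesis
      proof (rule hitcase[of "hmt C x lam" "G x lam"])
        show "adm (A \<union> hmt C x lam)" "T (A \<union> hmt C x lam) = T A - m A (hmt C x lam)"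
          using Tadd[OF Suc.prems(1) lam0] by auto
        show "m A (hmt C x lam) \<ge> t" by (rule x)
        show "finite (G x lam)" "card (G x lam) \<le> N" using G[OF lam0] by auto
      next
        fix y mu assume y: "mu > 0" "m A (hmt C y mu) \<ge> t" "hmt C y mu \<inter> hmt C x lam \<noteq> {}"
        have "mu \<in> \<Lambda>" using y unfolding \<Lambda>_def by blast
        then have "mu \<ge> lam / 2" using Lle lam by fastforce
        then show "G x lam \<inter> hmt C y mu \<noteq> {}" using Ghit[OF lam0 _ y(3)] by blast
      qed
    next
      case False
      then have L00: "L = 0" using L0 by simp
      have "\<forall>\<eta>>0. \<exists>y mu. 0 < mu \<and> mu < \<eta> \<and> m A (hmt C y mu) \<ge> t"
      proof (intro allI impI)
        fix \<eta> :: real assume "\<eta> > 0"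
        then obtain mu where "mu \<in> \<Lambda>" "mu < \<eta>"
          using cInf_lessD[OF \<open>\<Lambda> \<noteq> {}\<close>, of \<eta>] L00 unfolding L_def by auto
        then show "\<exists>y mu. 0 < mu \<and> mu < \<eta> \<and> m A (hmt C y mu) \<ge> t" unfolding \<Lambda>_def by blast
      qed
      from atom[OF Suc.prems(1) this] obtain p where p: "m A {p} \<ge> t" by blast
      show ?thesis
      proof (rule hitcase[of "{p}" "{p}"])
        show "adm (A \<union> {p})" "T (A \<union> {p}) = T A - m A {p}" using Tadd1[OF Suc.prems(1)] by auto
      qed (use p N in auto)
    qed
  qed
qed


lemma iterate_final:
  fixes C :: "'a::euclidean_space set" and m :: "'a set \<Rightarrow> 'a set \<Rightarrow> real"
    and T :: "'a set \<Rightarrow> real" and adm :: "'a set \<Rightarrow> bool" and G :: "'a \<Rightarrow> real \<Rightarrow> 'a set"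
  assumes eps: "\<epsilon> > 0" and T0: "T {} > 0" and adm0: "adm {}" and N: "N \<ge> 1"
    and G: "\<And>x lam. lam > 0 \<Longrightarrow> finite (G x lam) \<and> card (G x lam) \<le> N"
    and Ghit: "\<And>x lam y mu. lam > 0 \<Longrightarrow> mu \<ge> lam / 2 \<Longrightarrow> hmt C y mu \<inter> hmt C x lam \<noteq> {}
                 \<Longrightarrow> G x lam \<inter> hmt C y mu \<noteq> {}"
    and mloc: "\<And>A B D. D \<inter> A = D \<inter> B \<Longrightarrow> m A D = m B D"
    and Tpos: "\<And>A. adm A \<Longrightarrow> T A \<ge> 0"
    and Tadd: "\<And>A x lam. adm A \<Longrightarrow> lam > 0 \<Longrightarrow> adm (A \<union> hmt C x lam) \<and> T (A \<union> hmt C x lam) = T A - m A (hmt C x lam)"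
    and Tadd1: "\<And>A p. adm A \<Longrightarrow> adm (A \<union> {p}) \<and> T (A \<union> {p}) = T A - m A {p}"
    and atom: "\<And>A. adm A \<Longrightarrow> (\<forall>\<eta>>0. \<exists>y mu. 0 < mu \<and> mu < \<eta> \<and> m A (hmt C y mu) \<ge> \<epsilon> * T {}) \<Longrightarrow> \<exists>p. m A {p} \<ge> \<epsilon> * T {}"
  shows "\<exists>W. finite W \<and> real (card W) \<le> real N / \<epsilon> \<and>
       (\<forall>y mu. mu > 0 \<longrightarrow> m {} (hmt C y mu) \<ge> \<epsilon> * T {} \<longrightarrow> W \<inter> hmt C y mu \<noteq> {})"
proof -
  define k where "k = nat \<lfloor>1 / \<epsilon>\<rfloor>"
  have f0: "0 \<le> \<lfloor>1 / \<epsilon>\<rfloor>" using eps by simp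
  have kf: "real k = real_of_int \<lfloor>1 / \<epsilon>\<rfloor>" unfolding k_def using f0 by simp
  have k1: "real k \<le> 1 / \<epsilon>" unfolding kf by (rule of_int_floor_le)
  have k2: "1 / \<epsilon> < real k + 1" unfolding kf by (rule real_of_int_floor_add_one_gt)
  have "1 < (real k + 1) * \<epsilon>" using k2 eps by (simp add: field_simps)
  then have "T {} * 1 < T {} * ((real k + 1) * \<epsilon>)" using T0 by (rule mult_strict_left_mono)
  then have lt: "T {} < (real k + 1) * (\<epsilon> * T {})" by (simp add: algebra_simps)
  have tpos: "\<epsilon> * T {} > 0" using eps T0 by simp
  have "\<exists>W. finite W \<and> card W \<le> N * k \<and>
       (\<forall>y mu. mu > 0 \<longrightarrow> hmt C y mu \<inter> {} = {} \<longrightarrow> m {} (hmt C y mu) \<ge> \<epsilon> * T {} \<longrightarrow> W \<inter> hmt C y mu \<noteq> {})"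
    by (rule iterate[OF tpos N G Ghit mloc Tpos Tadd Tadd1 atom adm0 lt])
  then obtain W where W: "finite W" "card W \<le> N * k"
      "\<forall>y mu. mu > 0 \<longrightarrow> hmt C y mu \<inter> {} = {} \<longrightarrow> m {} (hmt C y mu) \<ge> \<epsilon> * T {} \<longrightarrow> W \<inter> hmt C y mu \<noteq> {}"
    by blast
  have "real (card W) \<le> real (N * k)" using W(2) by (simp only: of_nat_le_iff)
  also have "\<dots> = real N * real k" by simp
  also have "\<dots> \<le> real N * (1 / \<epsilon>)" using k1 by (intro mult_left_mono) auto
  finally have "real (card W) \<le> real N / \<epsilon>" by simp
  then show ?thesis using W by auto
qed



lemma small_balls:
  fixes M :: "'a::euclidean_space measure"
  assumes fm: "finite_measure M" and sM: "sets M = sets borel"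
    and supp: "measure M (UNIV - cball z r) = 0"
    and noatom: "\<And>p. measure M {p} = 0" and t: "t > 0"
  shows "\<exists>\<eta>>0. \<forall>q. measure M (cball q \<eta>) < t"
proof (rule ccontr)
  assume "\<not> ?thesis"
  then have "\<forall>n. \<exists>q. measure M (cball q (1 / Suc n)) \<ge> t"
    by (metis not_le of_nat_0_less_iff zero_less_Suc zero_less_divide_1_iff)
  then obtain qs where qs: "\<And>n. measure M (cball (qs n) (1 / Suc n)) \<ge> t" by metis
  have inS: "\<And>A. closed A \<Longrightarrow> A \<in> sets M" using sM by simp
  have inSo: "\<And>A. open A \<Longrightarrow> A \<in> sets M" using sM by simp
  have qin: "qs n \<in> cball z (r + 1)" for n
  proof (rule ccontr)
    assume "qs n \<notin> cball z (r + 1)"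
    have "cball (qs n) (1 / Suc n) \<subseteq> UNIV - cball z r"
    proof (rule subsetI)
      fix x assume x: "x \<in> cball (qs n) (1 / Suc n)"
      have "1 / real (Suc n) \<le> 1" by simp
      moreover have "dist (qs n) x \<le> 1 / real (Suc n)" using x by simp
      ultimately have "dist (qs n) x \<le> 1" by linarith
      moreover have "dist z (qs n) \<le> dist z x + dist (qs n) x" by (metis dist_commute dist_triangle)
      moreover have "dist z (qs n) > r + 1" using \<open>qs n \<notin> cball z (r + 1)\<close> by simp
      ultimately have "dist z x > r" by linarith
      then show "x \<in> UNIV - cball z r" by simp
    qed
    then have "measure M (cball (qs n) (1 / Suc n)) \<le> 0"
      using finite_measure.finite_measure_mono[OF fm _ inSo, of _ "UNIV - cball z r"] supp by auto
    with qs[of n] t show False by simp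
  qed
  have "compact (cball z (r + 1))" by simp
  then obtain p \<sigma> where p: "strict_mono \<sigma>" "(qs \<circ> \<sigma>) \<longlonglongrightarrow> p"
    using qin compact_imp_seq_compact seq_compactE by metis
  have ball_ge: "measure M (cball p (1 / Suc m)) \<ge> t" for m
  proof -
    define e where "e = 1 / (2 * Suc m)"
    have e: "e > 0" unfolding e_def by simp
    have "\<forall>\<^sub>F n in sequentially. dist ((qs \<circ> \<sigma>) n) p < e"
      using p(2) e by (rule tendstoD)
    moreover have "\<forall>\<^sub>F n in sequentially. n \<ge> 2 * Suc m" by (rule eventually_ge_at_top)
    ultimately have "\<forall>\<^sub>F n in sequentially. dist ((qs \<circ> \<sigma>) n) p < e \<and> n \<ge> 2 * Suc m"
      by (rule eventually_conj)
    then obtain n where n: "dist (qs (\<sigma> n)) p < e" "n \<ge> 2 * Suc m"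
      by (auto simp: eventually_sequentially)
    have "\<sigma> n \<ge> n" using p(1) by (rule seq_suble)
    then have "real (Suc (\<sigma> n)) \<ge> 2 * Suc m" using n by linarith
    then have rad: "1 / real (Suc (\<sigma> n)) \<le> e" unfolding e_def
      by (simp add: divide_simps)
    have "cball (qs (\<sigma> n)) (1 / Suc (\<sigma> n)) \<subseteq> cball p (1 / Suc m)"
    proof
      fix x assume "x \<in> cball (qs (\<sigma> n)) (1 / Suc (\<sigma> n))"
      then have "dist (qs (\<sigma> n)) x \<le> e" using rad by simp
      then have "dist p x \<le> 2 * e" using n(1) dist_triangle[of p x "qs (\<sigma> n)"]
        by (simp add: dist_commute)
      also have "2 * e = 1 / Suc m" unfolding e_def by (simp add: divide_simps)
      finally show "x \<in> cball p (1 / Suc m)" by simp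
    qed
    then have "measure M (cball (qs (\<sigma> n)) (1 / Suc (\<sigma> n))) \<le> measure M (cball p (1 / Suc m))"
      using finite_measure.finite_measure_mono[OF fm _ inS, of _ "cball p (1 / Suc m)"] by auto
    with qs[of "\<sigma> n"] show ?thesis by simp
  qed
  have anti: "antimono_on UNIV (\<lambda>m. cball p (1 / real (Suc m)))"
    by (intro monotone_onI) (auto intro!: subset_cball simp: divide_simps)
  have "(\<lambda>m. measure M (cball p (1 / real (Suc m)))) \<longlonglongrightarrow> measure M (\<Inter> (range (\<lambda>m. cball p (1 / real (Suc m)))))"
    by (rule finite_measure.finite_Lim_measure_decseq[OF fm _ anti]) (use inS in auto)
  moreover have "\<Inter> (range (\<lambda>m. cball p (1 / real (Suc m)))) = {p}"
  proof (intro antisym subsetI)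
    fix x assume x: "x \<in> \<Inter> (range (\<lambda>m. cball p (1 / real (Suc m))))"
    have "dist p x = 0"
    proof (rule ccontr)
      assume "dist p x \<noteq> 0"
      then have pos: "dist p x > 0" by simp
      then obtain m where "1 / real (Suc m) < dist p x"
        using reals_Archimedean[OF pos] by (auto simp: inverse_eq_divide)
      moreover have "dist p x \<le> 1 / real (Suc m)" using x by auto
      ultimately show False by simp
    qed
    then show "x \<in> {p}" by simp
  qed auto
  ultimately have "(\<lambda>m. measure M (cball p (1 / real (Suc m)))) \<longlonglongrightarrow> measure M {p}" by simp
  then have "t \<le> measure M {p}"
    by (rule LIMSEQ_le_const) (use ball_ge in auto)
  with noatom[of p] t show False by simp
qed


lemma separation:
  fixes S :: "'a::metric_space set"
  assumes S: "finite S"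
  shows "\<exists>\<delta>>0. \<forall>p\<in>S. \<forall>q\<in>S. p \<noteq> q \<longrightarrow> \<delta> \<le> dist p q"
proof -
  define P where "P = (\<lambda>(p, q). dist p q) ` {pq \<in> S \<times> S. fst pq \<noteq> snd pq}"
  have finP: "finite P" unfolding P_def using S by auto
  show ?thesis
  proof (cases "P = {}")
    case True
    then show ?thesis unfolding P_def by (intro exI[of _ 1]) auto
  next
    case False
    have pos: "x > 0" if "x \<in> P" for x using that unfolding P_def by auto
    have "Min P > 0" using Min_in[OF finP False] pos by blast
    moreover have "Min P \<le> dist p q" if "p \<in> S" "q \<in> S" "p \<noteq> q" for p q
    proof -
      have "dist p q \<in> P" unfolding P_def using that by (auto intro!: image_eqI[of _ _ "(p, q)"])
      then show ?thesis using Min_le[OF finP] by blast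
    qed
    ultimately show ?thesis by blast
  qed
qed

lemma card_split:
  assumes S: "finite S"
  shows "real (card (S - (A \<union> H))) = real (card (S - A)) - real (card ((H - A) \<inter> S))"
proof -
  have e: "S - A = (S - (A \<union> H)) \<union> ((H - A) \<inter> S)" by blast
  have "card (S - A) = card (S - (A \<union> H)) + card ((H - A) \<inter> S)"
    unfolding e by (rule card_Un_disjoint) (use S in auto)
  then show ?thesis by simp
qed

lemma fin_atom:
  fixes S C :: "'a::euclidean_space set"
  assumes S: "finite S" and R: "\<forall>c\<in>C. norm c \<le> R" and t: "t > 0"
    and small: "\<forall>\<eta>>0. \<exists>y mu. 0 < mu \<and> mu < \<eta> \<and> real (card ((hmt C y mu - A) \<inter> S)) \<ge> t"
  shows "\<exists>p. real (card (({p} - A) \<inter> S)) \<ge> t"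
proof (cases "t \<le> 1")
  case True
  have "\<exists>y mu. 0 < mu \<and> mu < 1 \<and> real (card ((hmt C y mu - A) \<inter> S)) \<ge> t" using small by simp
  then obtain y mu where "real (card ((hmt C y mu - A) \<inter> S)) \<ge> t" by blast
  then have "card ((hmt C y mu - A) \<inter> S) \<noteq> 0" using t by auto
  then obtain p where p: "p \<in> (hmt C y mu - A) \<inter> S" by (metis all_not_in_conv card.empty)
  then have "({p} - A) \<inter> S = {p}" by auto
  then show ?thesis using True by (intro exI[of _ p]) simp
next
  case False
  obtain \<delta> where \<delta>: "\<delta> > 0" "\<forall>p\<in>S. \<forall>q\<in>S. p \<noteq> q \<longrightarrow> \<delta> \<le> dist p q"
    using separation[OF S] by blast
  define R' where "R' = max R 1"
  have R': "R' > 0" "\<forall>c\<in>C. norm c \<le> R'" using R unfolding R'_def by auto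
  define \<eta> where "\<eta> = \<delta> / (4 * R')"
  have \<eta>: "\<eta> > 0" unfolding \<eta>_def using \<delta> R' by simp
  obtain y mu where ym: "0 < mu" "mu < \<eta>" "real (card ((hmt C y mu - A) \<inter> S)) \<ge> t"
    using small \<eta> by blast
  define X where "X = (hmt C y mu - A) \<inter> S"
  have finX: "finite X" unfolding X_def using S by simp
  have "\<not> card X \<le> Suc 0" using ym(3) False unfolding X_def by linarith
  then obtain a b where ab: "a \<in> X" "b \<in> X" "a \<noteq> b" using card_le_Suc0_iff_eq[OF finX] by blast
  then obtain c c' where cc: "c \<in> C" "c' \<in> C" "a = mu *\<^sub>R c + y" "b = mu *\<^sub>R c' + y"
    unfolding X_def hmt_def by auto
  have "dist a b = mu * norm (c - c')" using cc ym(1) by (simp add: dist_norm algebra_simps flip: scaleR_diff_right)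
  also have "\<dots> \<le> mu * (2 * R')"
  proof -
    have "norm (c - c') \<le> norm c + norm c'" by (rule norm_triangle_ineq4)
    also have "\<dots> \<le> 2 * R'"
    proof -
      have "norm c \<le> R'" "norm c' \<le> R'" using R'(2) cc by auto
      then show ?thesis by linarith
    qed
    finally show ?thesis using ym(1) by (intro mult_left_mono) auto
  qed
  also have "\<dots> < \<eta> * (2 * R')" using ym(2) R' by (intro mult_strict_right_mono) auto
  also have "\<dots> = \<delta> / 2" unfolding \<eta>_def using R' by (simp add: field_simps)
  finally have "dist a b < \<delta> / 2" .
  moreover have "\<delta> \<le> dist a b" using \<delta>(2) ab unfolding X_def by blast
  ultimately show ?thesis using \<delta>(1) by linarith
qed

lemma hmt_compact:
  fixes C :: "'a::euclidean_space set"
  assumes "compact C"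
  shows "compact (hmt C y mu)"
  unfolding hmt_def by (rule compact_continuous_image) (auto intro!: continuous_intros assms)

theorem mainTheorem1:
  "\<exists>c::real. c > 0 \<and>
    (\<forall>C :: 'a::euclidean_space set. convex_body C \<longrightarrow>
      (\<forall>S :: 'a set. \<forall>\<epsilon>::real. finite S \<and> S \<noteq> {} \<and> \<epsilon> > 0 \<longrightarrow>
         (\<exists>W. finite W \<and> real (card W) \<le> c / \<epsilon> \<and>
            (\<forall>C' \<in> homothets C. real (card (C' \<inter> S)) \<ge> \<epsilon> * real (card S) \<longrightarrow> W \<inter> C' \<noteq> {})))
    \<and> (\<forall>M :: 'a measure. \<forall>\<epsilon>::real. nice_measure C M \<and> emeasure M (space M) > 0 \<and> \<epsilon> > 0 \<longrightarrow>
         (\<exists>W. finite W \<and> real (card W) \<le> c / \<epsilon> \<and>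
            (\<forall>C' \<in> homothets C. emeasure M C' \<ge> ennreal \<epsilon> * emeasure M (space M) \<longrightarrow> W \<inter> C' \<noteq> {}))))"
proof -
  define d where "d = DIM('a)"
  define N where "N = nat (2 * Bd d + 1) ^ Suc d"
  have "Bd d \<ge> 0" unfolding Bd_def by simp
  then have N1: "N \<ge> 1" unfolding N_def by simp
  show ?thesis
  proof (rule exI[of _ "real N"], rule conjI)
    show "real N > 0" using N1 by simp
  next
    show "\<forall>C :: 'a set. convex_body C \<longrightarrow>
      (\<forall>S :: 'a set. \<forall>\<epsilon>::real. finite S \<and> S \<noteq> {} \<and> \<epsilon> > 0 \<longrightarrow>
         (\<exists>W. finite W \<and> real (card W) \<le> real N / \<epsilon> \<and>
            (\<forall>C' \<in> homothets C. real (card (C' \<inter> S)) \<ge> \<epsilon> * real (card S) \<longrightarrow> W \<inter> C' \<noteq> {})))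
    \<and> (\<forall>M :: 'a measure. \<forall>\<epsilon>::real. nice_measure C M \<and> emeasure M (space M) > 0 \<and> \<epsilon> > 0 \<longrightarrow>
         (\<exists>W. finite W \<and> real (card W) \<le> real N / \<epsilon> \<and>
            (\<forall>C' \<in> homothets C. emeasure M C' \<ge> ennreal \<epsilon> * emeasure M (space M) \<longrightarrow> W \<inter> C' \<noteq> {})))"
  proof (rule allI, rule impI, rule conjI)
    fix C :: "'a set" assume C: "convex_body C"
    have cvx: "convex C" and cpt: "compact C" using C unfolding convex_body_def by auto
    obtain u where u: "\<forall>i\<le>d. u i \<in> C"
      "\<forall>p\<in>C. \<exists>\<beta>. (\<Sum>j\<le>d. \<beta> j) = 1 \<and> p = (\<Sum>j\<le>d. \<beta> j *\<^sub>R u j) \<and> (\<forall>j\<le>d. \<bar>\<beta> j\<bar> \<le> 2)"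
      using normalize_body[OF C] unfolding d_def by blast
    define G where "G x lam = grid u d x lam" for x lam
    have G: "\<And>x lam. lam > 0 \<Longrightarrow> finite (G x lam) \<and> card (G x lam) \<le> N"
      unfolding G_def N_def using grid_card by blast
    have Ghit: "\<And>x lam y mu. lam > 0 \<Longrightarrow> mu \<ge> lam / 2 \<Longrightarrow> hmt C y mu \<inter> hmt C x lam \<noteq> {}
                 \<Longrightarrow> G x lam \<inter> hmt C y mu \<noteq> {}"
      unfolding G_def hmt_def by (rule grid_hit[OF cvx u(1) u(2)])
    have hmtE: "\<exists>x lam. lam > 0 \<and> C' = hmt C x lam" if "C' \<in> homothets C" for C'
      using that unfolding homothets_def hmt_def by blast
    have "bounded C" using cpt by (rule compact_imp_bounded)
    then obtain R where R: "\<forall>c\<in>C. norm c \<le> R" unfolding bounded_iff by blast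
    have Cne: "C \<noteq> {}" using C unfolding convex_body_def by auto
    show "\<forall>S \<epsilon>. finite S \<and> S \<noteq> {} \<and> \<epsilon> > 0 \<longrightarrow>
         (\<exists>W. finite W \<and> real (card W) \<le> real N / \<epsilon> \<and>
            (\<forall>C' \<in> homothets C. real (card (C' \<inter> S)) \<ge> \<epsilon> * real (card S) \<longrightarrow> W \<inter> C' \<noteq> {}))"
    proof (intro allI impI, elim conjE)
      fix S :: "'a set" and \<epsilon> :: real
      assume S: "finite S" "S \<noteq> {}" and eps: "\<epsilon> > 0"
      define m where "m A D = real (card ((D - A) \<inter> S))" for A D :: "'a set"
      define T where "T A = real (card (S - A))" for A :: "'a set"
      have T0: "T {} > 0" unfolding T_def using S by (simp add: card_gt_0_iff)
      have "\<exists>W. finite W \<and> real (card W) \<le> real N / \<epsilon> \<and>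
         (\<forall>y mu. mu > 0 \<longrightarrow> m {} (hmt C y mu) \<ge> \<epsilon> * T {} \<longrightarrow> W \<inter> hmt C y mu \<noteq> {})"
      proof (rule iterate_final[where adm="\<lambda>_. True" and T=T and m=m and G=G and C=C and N=N and \<epsilon>=\<epsilon>, OF eps T0 _ N1 G Ghit])
        show "m A D = m B D" if "D \<inter> A = D \<inter> B" for A B D
        proof -
          have "D - A = D - B" using that by blast
          then show ?thesis unfolding m_def by simp
        qed
        show "True \<and> T (A \<union> hmt C x lam) = T A - m A (hmt C x lam)" for A x lam
          unfolding T_def m_def using card_split[OF S(1)] by blast
        show "True \<and> T (A \<union> {p}) = T A - m A {p}" for A p
          unfolding T_def m_def using card_split[OF S(1)] by blast
        show "\<exists>p. m A {p} \<ge> \<epsilon> * T {}"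
          if "True" "\<forall>\<eta>>0. \<exists>y mu. 0 < mu \<and> mu < \<eta> \<and> m A (hmt C y mu) \<ge> \<epsilon> * T {}" for A
          using fin_atom[OF S(1) R, of "\<epsilon> * T {}" A] that T0 eps unfolding m_def by simp
      qed (auto simp: T_def)
      then obtain W where W: "finite W" "real (card W) \<le> real N / \<epsilon>"
        "\<forall>y mu. mu > 0 \<longrightarrow> m {} (hmt C y mu) \<ge> \<epsilon> * T {} \<longrightarrow> W \<inter> hmt C y mu \<noteq> {}" by blast
      show "\<exists>W. finite W \<and> real (card W) \<le> real N / \<epsilon> \<and>
            (\<forall>C' \<in> homothets C. real (card (C' \<inter> S)) \<ge> \<epsilon> * real (card S) \<longrightarrow> W \<inter> C' \<noteq> {})"
      proof (intro exI[of _ W] conjI ballI impI)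
        fix C' assume C': "C' \<in> homothets C" "real (card (C' \<inter> S)) \<ge> \<epsilon> * real (card S)"
        obtain x lam where xl: "lam > 0" "C' = hmt C x lam" using hmtE[OF C'(1)] by blast
        have "m {} (hmt C x lam) \<ge> \<epsilon> * T {}" using C'(2) xl unfolding m_def T_def by simp
        then show "W \<inter> C' \<noteq> {}" using W(3) xl by blast
      qed (use W in auto)
    qed
    show "\<forall>M \<epsilon>. nice_measure C M \<and> emeasure M (space M) > 0 \<and> \<epsilon> > 0 \<longrightarrow>
         (\<exists>W. finite W \<and> real (card W) \<le> real N / \<epsilon> \<and>
            (\<forall>C' \<in> homothets C. emeasure M C' \<ge> ennreal \<epsilon> * emeasure M (space M) \<longrightarrow> W \<inter> C' \<noteq> {}))"
    proof (intro allI impI, elim conjE)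
      fix M :: "'a measure" and \<epsilon> :: real
      assume nice: "nice_measure C M" and pos: "emeasure M (space M) > 0" and eps: "\<epsilon> > 0"
      have sM: "sets M = sets borel" and fin: "emeasure M (space M) < \<infinity>"
        and nd: "non_degenerate C M"
        using nice unfolding nice_measure_def locally_finite_borel_def by auto
      obtain z r where zr: "emeasure M (cball z r) = emeasure M (space M)"
        using nice unfolding nice_measure_def by blast
      have spM: "space M = UNIV" using sets_eq_imp_space_eq[OF sM] by simp
      have fm: "finite_measure M" using fin by (intro finite_measureI) simp
      have inS: "A \<in> sets M" if "closed A" for A using that sM by simp
      have inSo: "A \<in> sets M" if "open A" for A using that sM by simp
      have U: "UNIV \<in> sets M" using sets.top[of M] spM by simp
      have UA: "UNIV - A \<in> sets M" if "A \<in> sets M" for A using sets.compl_sets[OF that] spM by simp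
      have em: "emeasure M A = ennreal (measure M A)" for A
        using finite_measure.emeasure_eq_measure[OF fm] by simp
      have supp: "measure M (UNIV - cball z r) = 0"
      proof -
        have "measure M (UNIV - cball z r) = measure M UNIV - measure M (cball z r)"
          by (rule finite_measure.finite_measure_Diff[OF fm]) (auto intro: inS U)
        moreover have "measure M (cball z r) = measure M UNIV"
          using zr spM em by (metis ennreal_inj measure_nonneg)
        ultimately show ?thesis by simp
      qed
      have noatom: "measure M {p} = 0" for p
      proof -
        have "frontier C \<noteq> {}"
        proof -
          have "C \<noteq> UNIV" using \<open>bounded C\<close> not_bounded_UNIV by metis
          then show ?thesis using Cne frontier_not_empty[of C] by blast
        qed
        then obtain c0 where c0: "c0 \<in> frontier C" by blast
        have fe: "(\<lambda>c::'a. 1 *\<^sub>R c + (p - c0)) = (+) (p - c0)" by (rule ext) (simp add: add.commute)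
        have "hmt C (p - c0) 1 = (+) (p - c0) ` C" unfolding hmt_def fe ..
        then have fr: "frontier (hmt C (p - c0) 1) = (+) (p - c0) ` frontier C"
          by (simp add: frontier_translation)
        have "hmt C (p - c0) 1 \<in> homothets C" unfolding hmt_def homothets_def
          by (intro CollectI exI[of _ 1] exI[of _ "p - c0"]) simp
        then have "emeasure M (frontier (hmt C (p - c0) 1)) = 0" using nd unfolding non_degenerate_def by blast
        moreover have "p \<in> (+) (p - c0) ` frontier C" using c0 by (intro image_eqI[of _ _ c0]) auto
        then have "{p} \<subseteq> frontier (hmt C (p - c0) 1)" using fr by simp
        then have "emeasure M {p} \<le> emeasure M (frontier (hmt C (p - c0) 1))"
          by (rule emeasure_mono) (intro inS frontier_closed)
        ultimately have "emeasure M {p} = 0" by simp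
        then have "ennreal (measure M {p}) = 0" using em[of "{p}"] by simp
        then have "measure M {p} \<le> 0" by (simp only: ennreal_eq_0_iff)
        then show ?thesis using measure_nonneg[of M "{p}"] by linarith
      qed
      define m where "m A D = measure M (D - A)" for A D :: "'a set"
      define T where "T A = measure M (UNIV - A)" for A :: "'a set"
      have T0: "T {} > 0"
      proof -
        have "ennreal (measure M UNIV) > 0" using pos em[of UNIV] spM by simp
        then have "measure M UNIV > 0" by (simp only: ennreal_less_zero_iff)
        then show ?thesis unfolding T_def by simp
      qed
      have "\<exists>W. finite W \<and> real (card W) \<le> real N / \<epsilon> \<and>
         (\<forall>y mu. mu > 0 \<longrightarrow> m {} (hmt C y mu) \<ge> \<epsilon> * T {} \<longrightarrow> W \<inter> hmt C y mu \<noteq> {})"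
      proof (rule iterate_final[where adm="\<lambda>A. A \<in> sets M" and T=T and m=m and G=G and C=C and N=N and \<epsilon>=\<epsilon>, OF eps T0 _ N1 G Ghit])
        show "{} \<in> sets M" by simp
        show "m A D = m B D" if "D \<inter> A = D \<inter> B" for A B D
        proof -
          have "D - A = D - B" using that by blast
          then show ?thesis unfolding m_def by simp
        qed
        show "T A \<ge> 0" for A unfolding T_def by simp
        show "A \<union> hmt C x lam \<in> sets M \<and> T (A \<union> hmt C x lam) = T A - m A (hmt C x lam)"
          if "A \<in> sets M" "lam > 0" for A x lam
        proof -
          have H: "hmt C x lam \<in> sets M" by (intro inS compact_imp_closed hmt_compact cpt)
          have e1: "UNIV - (A \<union> hmt C x lam) = (UNIV - A) - (hmt C x lam - A)" by blast
          have e2: "measure M ((UNIV - A) - (hmt C x lam - A)) = measure M (UNIV - A) - measure M (hmt C x lam - A)"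
            by (rule finite_measure.finite_measure_Diff[OF fm]) (use that H UA in auto)
          have "T (A \<union> hmt C x lam) = T A - m A (hmt C x lam)" unfolding T_def m_def e1 by (rule e2)
          moreover have "A \<union> hmt C x lam \<in> sets M" using that(1) H by (rule sets.Un)
          ultimately show ?thesis by blast
        qed
        show "A \<union> {p} \<in> sets M \<and> T (A \<union> {p}) = T A - m A {p}" if "A \<in> sets M" for A p
        proof -
          have H: "{p} \<in> sets M" by (intro inS) simp
          have e1: "UNIV - (A \<union> {p}) = (UNIV - A) - ({p} - A)" by blast
          have e2: "measure M ((UNIV - A) - ({p} - A)) = measure M (UNIV - A) - measure M ({p} - A)"
            by (rule finite_measure.finite_measure_Diff[OF fm]) (use that H UA in auto)
          have "T (A \<union> {p}) = T A - m A {p}" unfolding T_def m_def e1 by (rule e2)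
          moreover have "A \<union> {p} \<in> sets M" using that(1) H by (rule sets.Un)
          ultimately show ?thesis by blast
        qed
        show "\<exists>p. m A {p} \<ge> \<epsilon> * T {}"
          if "A \<in> sets M" and sm: "\<forall>\<eta>>0. \<exists>y mu. 0 < mu \<and> mu < \<eta> \<and> m A (hmt C y mu) \<ge> \<epsilon> * T {}" for A
        proof -
          have tp: "\<epsilon> * T {} > 0" using eps T0 by simp
          obtain \<eta> where \<eta>: "\<eta> > 0" "\<forall>q. measure M (cball q \<eta>) < \<epsilon> * T {}"
            using small_balls[OF fm sM supp noatom tp] by blast
          define R' where "R' = max R 1"
          have R': "R' > 0" "\<forall>c\<in>C. norm c \<le> R'" using R unfolding R'_def by auto
          have "\<eta> / (2 * R') > 0" using \<eta>(1) R'(1) by simp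
          then obtain y mu where ym: "0 < mu" "mu < \<eta> / (2 * R')" "m A (hmt C y mu) \<ge> \<epsilon> * T {}"
            using sm by blast
          obtain c0 where c0: "c0 \<in> C" using Cne by blast
          have sub: "hmt C y mu - A \<subseteq> cball (mu *\<^sub>R c0 + y) \<eta>"
          proof
            fix a assume "a \<in> hmt C y mu - A"
            then obtain c where c: "c \<in> C" "a = mu *\<^sub>R c + y" unfolding hmt_def by auto
            have "dist (mu *\<^sub>R c0 + y) a = mu * norm (c0 - c)"
              using c ym(1) by (simp add: dist_norm algebra_simps flip: scaleR_diff_right)
            also have "\<dots> \<le> mu * (2 * R')"
            proof -
              have "norm (c0 - c) \<le> norm c0 + norm c" by (rule norm_triangle_ineq4)
              also have "\<dots> \<le> 2 * R'"
              proof -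
                have "norm c \<le> R'" "norm c0 \<le> R'" using R'(2) c c0 by auto
                then show ?thesis by linarith
              qed
              finally show ?thesis using ym(1) by (intro mult_left_mono) auto
            qed
            also have "\<dots> \<le> \<eta>" using ym(2) R'(1) by (simp add: field_simps)
            finally show "a \<in> cball (mu *\<^sub>R c0 + y) \<eta>" by simp
          qed
          have "m A (hmt C y mu) \<le> measure M (cball (mu *\<^sub>R c0 + y) \<eta>)"
            unfolding m_def by (rule finite_measure.finite_measure_mono[OF fm sub]) (intro inS closed_cball)
          with \<eta>(2)[rule_format, of "mu *\<^sub>R c0 + y"] ym(3) have False by linarith
          then show ?thesis by blast
        qed
      qed
      then obtain W where W: "finite W" "real (card W) \<le> real N / \<epsilon>"
        "\<forall>y mu. mu > 0 \<longrightarrow> m {} (hmt C y mu) \<ge> \<epsilon> * T {} \<longrightarrow> W \<inter> hmt C y mu \<noteq> {}" by blast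
      show "\<exists>W. finite W \<and> real (card W) \<le> real N / \<epsilon> \<and>
            (\<forall>C' \<in> homothets C. emeasure M C' \<ge> ennreal \<epsilon> * emeasure M (space M) \<longrightarrow> W \<inter> C' \<noteq> {})"
      proof (intro exI[of _ W] conjI ballI impI)
        fix C' assume C': "C' \<in> homothets C" "emeasure M C' \<ge> ennreal \<epsilon> * emeasure M (space M)"
        obtain x lam where xl: "lam > 0" "C' = hmt C x lam" using hmtE[OF C'(1)] by blast
        have "ennreal (\<epsilon> * measure M UNIV) = ennreal \<epsilon> * ennreal (measure M UNIV)"
          using eps by (intro ennreal_mult) auto
        also have "\<dots> = ennreal \<epsilon> * emeasure M (space M)" using em[of UNIV] spM by simp
        also have "\<dots> \<le> emeasure M C'" by (rule C'(2))
        also have "\<dots> = ennreal (measure M C')" by (rule em)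
        finally have "ennreal (\<epsilon> * measure M UNIV) \<le> ennreal (measure M C')" .
        then have "\<epsilon> * measure M UNIV \<le> measure M C'" by (subst (asm) ennreal_le_iff) auto
        then have "m {} (hmt C x lam) \<ge> \<epsilon> * T {}" using xl unfolding m_def T_def by simp
        then show "W \<inter> C' \<noteq> {}" using W(3) xl by blast
      qed (use W in auto)
    qed
  qed
qed
  qed

end
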